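(* Let $k\in\,]0,2]$, $M>0$, $\beta\in\,]0,\tfrac12[$, $0<\sigma_0\le\min\{1,\frac{3\beta^3}{4\pi M^2}\}$ and $I=\inf_{f\in\mathcal A}\mathcal D(f)$. Let $h\in\mathcal A$ with $\mathcal D(h)<0$ and let $\delta>0$ be such that $|\mathcal D(h)|\ge M+\delta$. Define $\eta=\min\{1,\frac{\delta}{6M}\}$ and take $$R\ge\max\Big\{\frac{8M}{3},\frac{2M}{1-\frac{1}{(1+\frac{\delta}{6M})^2}}\Big\}.$$ If $g\in\mathcal A$ satisfies $g\le1$, $\mathcal D(g)\le I+\eta\,\Delta M$ and $\Delta M\in\,]0,M[$, where $\Delta M=\int_{|x|\ge R}\int_{\mathbb R^3}\sqrt{1+|v|^2}g\,dx\,dv$, then $\Delta M\ge\frac{\delta}{18}$. In particular, if $(f_n)\subset\mathcal A$ is a sequence with $\lim_{n\to\infty}\mathcal D(f_n)=I$, $f_n\le1$, and $\lim_{n\to\infty}(\Delta M)_n=\varepsilon_0$ for some $\varepsilon_0\in\,]0,M[$, where $(\Delta M)_n=\int_{|x|\ge R_n}\int_{\mathbb R^3}\sqrt{1+|v|^2}f_n\,dx\,dv$ with $R_n\ge\max\{\frac{8M}{3},\frac{2M}{1-(1+\frac{\delta}{6M})^{-2}}\}$, then $\varepsilon_0\ge\frac{\delta}{18}$.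
   Context: Let $\chi(s)=\frac{k}{k+1}s^{1+1/k}$. A measurable $f\ge0$ on $\mathbb R^3\times\mathbb R^3$ is spherically symmetric if $f(Ax,Av)=f(x,v)$ for all $A\in SO(3)$. For such $f$: $\rho_f(x)=\int\sqrt{1+|v|^2}f(x,v)\,dv$ (radial, written $\rho_f(r)$), $m_f(r)=\int_{|x|\le r}\int\sqrt{1+|v|^2}f\,dx\,dv$, $\lambda_f$ given by $e^{-2\lambda_f(r)}=1-2m_f(r)/r$, and $\mathcal D(f)=\int\int e^{\lambda_f(|x|)}(\chi(f)-f)\,dx\,dv$. $\mathcal A$ is the set of measurable spherically symmetric $f\ge0$ with $\int\int\sqrt{1+|v|^2}f\,dx\,dv=M$ and $\rho_f(r)\le\sigma_0$ for all $r\ge0$. *)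

theory Defs
  imports "HOL-Analysis.Analysis"
begin

type_synonym vec3 = "real ^ 3"
type_synonym distrib = "vec3 \<Rightarrow> vec3 \<Rightarrow> real"

definition chi :: "real \<Rightarrow> real \<Rightarrow> real" where
  "chi k s = k / (k + 1) * s powr (1 + 1 / k)"

definition SO3 :: "(real ^ 3 ^ 3) set" where
  "SO3 = {A. orthogonal_matrix A \<and> det A = 1}"

definition spherically_symmetric :: "distrib \<Rightarrow> bool" where
  "spherically_symmetric f \<longleftrightarrow> (\<forall>A\<in>SO3. \<forall>x v. f (A *v x) (A *v v) = f x v)"

definition rho :: "distrib \<Rightarrow> vec3 \<Rightarrow> ennreal" where
  "rho f x = (\<integral>\<^sup>+ v. ennreal (sqrt (1 + (norm v)\<^sup>2) * f x v) \<partial>lborel)"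

definition mass :: "distrib \<Rightarrow> ennreal" where
  "mass f = (\<integral>\<^sup>+ x. rho f x \<partial>lborel)"

definition m_enc :: "distrib \<Rightarrow> real \<Rightarrow> ennreal" where
  "m_enc f r = (\<integral>\<^sup>+ x. indicator {x. norm x \<le> r} x * rho f x \<partial>lborel)"

text \<open>lambda_f with exp(-2 lambda_f(r)) = 1 - 2 m_f(r)/r (at r = 0, m_f(0)/0 = 0 so lambda_f(0) = 0)\<close>
definition lambda_f :: "distrib \<Rightarrow> real \<Rightarrow> real" where
  "lambda_f f r = - (1/2) * ln (1 - 2 * enn2real (m_enc f r) / r)"

text \<open>D(f) = int int e^{lambda_f(|x|)} (chi(f) - f) dx dv, taken as difference of the two
  (nonnegative) integrals, in the extended reals\<close>
definition Dfun :: "real \<Rightarrow> distrib \<Rightarrow> ereal" where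
  "Dfun k f =
     enn2ereal (\<integral>\<^sup>+ x. \<integral>\<^sup>+ v. ennreal (exp (lambda_f f (norm x)) * chi k (f x v)) \<partial>lborel \<partial>lborel)
   - enn2ereal (\<integral>\<^sup>+ x. \<integral>\<^sup>+ v. ennreal (exp (lambda_f f (norm x)) * f x v) \<partial>lborel \<partial>lborel)"

definition admissible :: "real \<Rightarrow> real \<Rightarrow> distrib set" where
  "admissible M \<sigma>0 = {f. (\<lambda>(x, v). f x v) \<in> borel_measurable (lborel \<Otimes>\<^sub>M lborel)
      \<and> (\<forall>x v. 0 \<le> f x v) \<and> spherically_symmetric f
      \<and> mass f = ennreal M \<and> (\<forall>x. rho f x \<le> ennreal \<sigma>0)}"

definition DeltaM :: "real \<Rightarrow> distrib \<Rightarrow> real" where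
  "DeltaM R g = enn2real (\<integral>\<^sup>+ x. indicator {x. R \<le> norm x} x * rho g x \<partial>lborel)"

end

theory Submission imports Defs begin

definition EE :: "distrib \<Rightarrow> vec3 \<Rightarrow> real" where
  "EE f x = exp (lambda_f f (norm x))"

lemma m_enc_mono: "r \<le> s \<Longrightarrow> m_enc f r \<le> m_enc f s"
  unfolding m_enc_def by (intro nn_integral_mono) (auto simp: indicator_def)

lemma m_enc_le_mass: "m_enc f r \<le> mass f"
  unfolding m_enc_def mass_def by (intro nn_integral_mono) (auto simp: indicator_def)

lemma m_mono_real:
  assumes "mass f < top"
  shows "mono (\<lambda>r. enn2real (m_enc f r))"
proof (rule monoI)
  fix r s :: real assume "r \<le> s"
  have fin: "m_enc f s < top" using m_enc_le_mass[of f s] assms by (rule le_less_trans)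
  show "enn2real (m_enc f r) \<le> enn2real (m_enc f s)"
    by (rule enn2real_mono[OF m_enc_mono[of r s f, OF \<open>r \<le> s\<close>] fin])
qed

lemma lambda_meas:
  assumes "mass f < top"
  shows "lambda_f f \<in> borel_measurable borel"
proof -
  have m: "(\<lambda>r. enn2real (m_enc f r)) \<in> borel_measurable borel"
    by (rule borel_measurable_mono[OF m_mono_real[OF assms]])
  have id: "(\<lambda>r::real. r) \<in> borel_measurable borel" by simp
  have "(\<lambda>r. 2 * enn2real (m_enc f r)) \<in> borel_measurable borel"
    by (rule borel_measurable_times[OF borel_measurable_const m])
  then have "(\<lambda>r. 2 * enn2real (m_enc f r) / r) \<in> borel_measurable borel"
    by (rule borel_measurable_divide[OF _ id])
  then have "(\<lambda>r. 1 - 2 * enn2real (m_enc f r) / r) \<in> borel_measurable borel"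
    by (rule borel_measurable_diff[OF borel_measurable_const])
  then have "(\<lambda>r. ln (1 - 2 * enn2real (m_enc f r) / r)) \<in> borel_measurable borel"
    by (rule borel_measurable_ln)
  then have "(\<lambda>r. - (1/2) * ln (1 - 2 * enn2real (m_enc f r) / r)) \<in> borel_measurable borel"
    by (rule borel_measurable_times[OF borel_measurable_const])
  then show ?thesis unfolding lambda_f_def[abs_def] .
qed

lemma EE_meas:
  assumes "mass f < top"
  shows "EE f \<in> borel_measurable lborel"
proof -
  have "(\<lambda>x. lambda_f f (norm x)) \<in> borel_measurable borel"
    by (rule measurable_compose[OF borel_measurable_norm lambda_meas[OF assms]])
  then have "(\<lambda>x. exp (lambda_f f (norm x))) \<in> borel_measurable borel"
    by (rule measurable_compose[OF _ borel_measurable_exp])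
  then show ?thesis unfolding EE_def[abs_def] by simp
qed

lemma nn_integral_scale3:
  fixes F :: "vec3 \<Rightarrow> ennreal"
  assumes F[measurable]: "F \<in> borel_measurable borel" and a: "0 < a"
  shows "(\<integral>\<^sup>+x. F (x /\<^sub>R a) \<partial>lborel) = ennreal (a^3) * (\<integral>\<^sup>+x. F x \<partial>lborel)"
proof -
  have "(\<integral>\<^sup>+x. F (x /\<^sub>R a) \<partial>lborel)
     = (\<integral>\<^sup>+x. F (x /\<^sub>R a) \<partial>(density (distr lborel borel (\<lambda>x. 0 + a *\<^sub>R x)) (\<lambda>_. \<bar>a\<bar>^DIM(vec3))))"
    using lborel_affine[of a "0::vec3"] a by simp
  also have "\<dots> = (\<integral>\<^sup>+x. ennreal (a^3) * F x \<partial>lborel)"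
    using a by (simp add: nn_integral_density nn_integral_distr)
  also have "\<dots> = ennreal (a^3) * (\<integral>\<^sup>+x. F x \<partial>lborel)"
    by (simp add: nn_integral_cmult)
  finally show ?thesis .
qed

lemma chi_le:
  assumes "0 < k" "0 \<le> s" "s \<le> 1" shows "chi k s \<le> s"
proof (cases "s = 0")
  case True then show ?thesis by (simp add: chi_def)
next
  case False
  have "s powr (1 + 1/k) \<le> s powr 1"
    using assms False by (intro powr_mono') auto
  moreover have "k / (k+1) \<le> 1" using assms by simp
  moreover have "0 \<le> s powr (1 + 1/k)" by simp
  ultimately have "k/(k+1) * s powr (1 + 1/k) \<le> 1 * s powr 1"
    using assms by (intro mult_mono) auto
  then show ?thesis using assms False by (simp add: chi_def)
qed

lemma chi_nonneg: "0 < k \<Longrightarrow> 0 \<le> chi k s"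
  by (simp add: chi_def)

lemma chi_zero: "chi k 0 = 0" by (simp add: chi_def)

lemma rho_meas:
  assumes "(\<lambda>(x, v). f x v) \<in> borel_measurable (lborel \<Otimes>\<^sub>M lborel)"
  shows "rho f \<in> borel_measurable lborel"
proof -
  have h[measurable]: "(\<lambda>p. f (fst p) (snd p)) \<in> borel_measurable (lborel \<Otimes>\<^sub>M lborel)"
    using assms by (simp add: case_prod_beta')
  have "(\<lambda>p. ennreal (sqrt (1 + (norm (snd p))\<^sup>2) * f (fst p) (snd p))) \<in> borel_measurable (lborel \<Otimes>\<^sub>M lborel)"
    by measurable
  then have "case_prod (\<lambda>x v. ennreal (sqrt (1 + (norm v)\<^sup>2) * f x v)) \<in> borel_measurable (lborel \<Otimes>\<^sub>M lborel)"
    by (simp add: case_prod_beta')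
  from lborel.borel_measurable_nn_integral[OF this] show ?thesis
    unfolding rho_def[abs_def] by simp
qed

lemma split_meas:
  assumes "(\<lambda>(x, v). g x v) \<in> borel_measurable (lborel \<Otimes>\<^sub>M lborel)"
  shows "(\<lambda>p. g (fst p) (snd p)) \<in> borel_measurable (lborel \<Otimes>\<^sub>M lborel)"
  using assms by (simp add: case_prod_beta')

lemma joint_meas_chi:
  assumes h: "(\<lambda>p. g (fst p) (snd p)) \<in> borel_measurable (lborel \<Otimes>\<^sub>M lborel)"
    and E: "E \<in> borel_measurable lborel"
  shows "(\<lambda>p. ennreal (E (fst p) * chi k (g (fst p) (snd p)))) \<in> borel_measurable (lborel \<Otimes>\<^sub>M lborel)"
proof -
  have E1: "(\<lambda>p. E (fst p)) \<in> borel_measurable (lborel \<Otimes>\<^sub>M lborel)"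
    by (rule measurable_compose[OF measurable_fst E])
  have c: "(\<lambda>p. chi k (g (fst p) (snd p))) \<in> borel_measurable (lborel \<Otimes>\<^sub>M lborel)"
    unfolding chi_def
    by (rule borel_measurable_times[OF borel_measurable_const powr_real_measurable[OF h borel_measurable_const]])
  show ?thesis
    by (rule measurable_compose[OF borel_measurable_times[OF E1 c] measurable_ennreal])
qed

lemma joint_meas_g:
  assumes h: "(\<lambda>p. g (fst p) (snd p)) \<in> borel_measurable (lborel \<Otimes>\<^sub>M lborel)"
    and E: "E \<in> borel_measurable lborel"
  shows "(\<lambda>p. ennreal (E (fst p) * g (fst p) (snd p))) \<in> borel_measurable (lborel \<Otimes>\<^sub>M lborel)"
proof -
  have E1: "(\<lambda>p. E (fst p)) \<in> borel_measurable (lborel \<Otimes>\<^sub>M lborel)"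
    by (rule measurable_compose[OF measurable_fst E])
  show ?thesis
    by (rule measurable_compose[OF borel_measurable_times[OF E1 h] measurable_ennreal])
qed

lemma inner_meas:
  assumes "(\<lambda>p. G (fst p) (snd p)) \<in> borel_measurable (lborel \<Otimes>\<^sub>M lborel)"
  shows "(\<lambda>x. \<integral>\<^sup>+v. G x v \<partial>lborel) \<in> borel_measurable lborel"
proof -
  have "case_prod G \<in> borel_measurable (lborel \<Otimes>\<^sub>M lborel)"
    using assms by (simp add: case_prod_beta')
  from lborel.borel_measurable_nn_integral[OF this] show ?thesis by simp
qed

lemma slice_meas:
  assumes "(\<lambda>p. G (fst p) (snd p)) \<in> borel_measurable (lborel \<Otimes>\<^sub>M lborel)"
  shows "G x \<in> borel_measurable lborel"
  using measurable_Pair2[OF assms, of x] by simp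

lemma rho_integrand_meas:
  assumes "(\<lambda>(x, v). f x v) \<in> borel_measurable (lborel \<Otimes>\<^sub>M lborel)"
  shows "(\<lambda>p. ennreal (sqrt (1 + (norm (snd p))\<^sup>2) * f (fst p) (snd p))) \<in> borel_measurable (lborel \<Otimes>\<^sub>M lborel)"
proof -
  have h[measurable]: "(\<lambda>p. f (fst p) (snd p)) \<in> borel_measurable (lborel \<Otimes>\<^sub>M lborel)"
    using assms by (simp add: case_prod_beta')
  show ?thesis by measurable
qed

definition NN :: "distrib \<Rightarrow> ennreal" where
  "NN f = (\<integral>\<^sup>+ x. \<integral>\<^sup>+ v. ennreal (EE f x * f x v) \<partial>lborel \<partial>lborel)"

definition PP :: "real \<Rightarrow> distrib \<Rightarrow> ennreal" where
  "PP k f = (\<integral>\<^sup>+ x. \<integral>\<^sup>+ v. ennreal (EE f x * chi k (f x v)) \<partial>lborel \<partial>lborel)"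

lemma Dfun_eq: "Dfun k f = enn2ereal (PP k f) - enn2ereal (NN f)"
  by (simp add: Dfun_def PP_def NN_def EE_def)

lemma u_bound:
  assumes M: "0 < M" and b: "0 < \<beta>" and s: "0 < \<sigma>0" "\<sigma>0 \<le> 3*\<beta>^3/(4*pi*M^2)"
    and f: "f \<in> admissible M \<sigma>0" and r: "0 < r"
  shows "2 * enn2real (m_enc f r) / r \<le> 2*\<beta>"
proof -
  from f have mf: "mass f = ennreal M" and rb: "\<And>x. rho f x \<le> ennreal \<sigma>0"
    by (auto simp: admissible_def)
  have m1: "enn2real (m_enc f r) \<le> M"
    using m_enc_le_mass[of f r] mf M by (intro enn2real_leI) auto
  have "m_enc f r \<le> (\<integral>\<^sup>+x. ennreal \<sigma>0 * indicator (cball (0::vec3) r) x \<partial>lborel)"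
    unfolding m_enc_def by (intro nn_integral_mono) (auto simp: indicator_def rb)
  also have "\<dots> = ennreal \<sigma>0 * emeasure lborel (cball (0::vec3) r)"
    by (simp add: nn_integral_cmult_indicator)
  also have "\<dots> = ennreal \<sigma>0 * ennreal (4/3*pi*r^3)"
    using emeasure_cball[of r "0::vec3"] r by (simp add: unit_ball_vol_3 mult.commute)
  also have "\<dots> = ennreal (\<sigma>0 * (4/3*pi*r^3))"
    by (rule ennreal_mult[symmetric]) (use s r in auto)
  finally have m2: "enn2real (m_enc f r) \<le> \<sigma>0 * (4/3*pi*r^3)"
    using s r by (intro enn2real_leI) auto
  have "enn2real (m_enc f r) \<le> \<beta> * r"
  proof (cases "M \<le> \<beta> * r")
    case True then show ?thesis using m1 by linarith
  next
    case False
    have "\<sigma>0 * (4/3*pi*r^3) \<le> 3*\<beta>^3/(4*pi*M^2) * (4/3*pi*r^3)"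
      using s r by (intro mult_right_mono) auto
    also have "\<dots> = (\<beta>*r) * ((\<beta>*r)/M)^2"
      using M by (simp add: field_simps power2_eq_square power3_eq_cube)
    also have "\<dots> \<le> (\<beta>*r) * 1"
      using False b r M by (intro mult_left_mono power_le_one) auto
    finally show ?thesis using m2 by linarith
  qed
  then show ?thesis using r by (simp add: pos_divide_le_eq)
qed

lemma EE_le_C:
  assumes M: "0 < M" and b: "0 < \<beta>" "\<beta> < 1/2" and s: "0 < \<sigma>0" "\<sigma>0 \<le> 3*\<beta>^3/(4*pi*M^2)"
    and f: "f \<in> admissible M \<sigma>0"
  shows "EE f x \<le> exp (-(1/2) * ln (1 - 2*\<beta>))"
proof (cases "norm x = 0")
  case True
  have "ln (1 - 2*\<beta>) \<le> 0" using b by simp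
  then show ?thesis using True by (simp add: EE_def lambda_f_def)
next
  case False
  then have r: "0 < norm x" by simp
  have u: "2 * enn2real (m_enc f (norm x)) / norm x \<le> 2*\<beta>"
    by (rule u_bound[OF M b(1) s f r])
  have "ln (1 - 2*\<beta>) \<le> ln (1 - 2 * enn2real (m_enc f (norm x)) / norm x)"
    using u b by simp
  then show ?thesis by (simp add: EE_def lambda_f_def)
qed

lemma inner_le:
  assumes fm: "(\<lambda>(x, v). f x v) \<in> borel_measurable (lborel \<Otimes>\<^sub>M lborel)"
    and fnn: "\<And>v. 0 \<le> f x v" and E: "0 \<le> E" "E \<le> c"
  shows "(\<integral>\<^sup>+v. ennreal (E * f x v) \<partial>lborel) \<le> ennreal c * rho f x"
proof -
  have sm: "(\<lambda>v. ennreal (sqrt (1 + (norm v)\<^sup>2) * f x v)) \<in> borel_measurable lborel"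
    using slice_meas[OF rho_integrand_meas[OF fm], of x] by simp
  have "(\<integral>\<^sup>+v. ennreal (E * f x v) \<partial>lborel) \<le> (\<integral>\<^sup>+v. ennreal c * ennreal (sqrt (1 + (norm v)\<^sup>2) * f x v) \<partial>lborel)"
  proof (intro nn_integral_mono)
    fix v :: vec3
    have s1: "1 \<le> sqrt (1 + (norm v)\<^sup>2)" by simp
    have "E * f x v \<le> c * f x v" using E fnn[of v] by (intro mult_right_mono) auto
    also have "\<dots> \<le> c * (sqrt (1 + (norm v)\<^sup>2) * f x v)"
      using E fnn[of v] s1 mult_right_mono[OF s1 fnn[of v]] by (intro mult_left_mono) auto
    finally have "ennreal (E * f x v) \<le> ennreal (c * (sqrt (1 + (norm v)\<^sup>2) * f x v))"
      by (rule ennreal_leI)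
    also have "\<dots> = ennreal c * ennreal (sqrt (1 + (norm v)\<^sup>2) * f x v)"
      using E fnn[of v] by (intro ennreal_mult) auto
    finally show "ennreal (E * f x v) \<le> ennreal c * ennreal (sqrt (1 + (norm v)\<^sup>2) * f x v)" .
  qed
  also have "\<dots> = ennreal c * rho f x"
    unfolding rho_def by (rule nn_integral_cmult[OF sm])
  finally show ?thesis .
qed

lemma adm_D:
  assumes "f \<in> admissible M \<sigma>0"
  shows "(\<lambda>(x, v). f x v) \<in> borel_measurable (lborel \<Otimes>\<^sub>M lborel)" "\<And>x v. 0 \<le> f x v"
    "spherically_symmetric f" "mass f = ennreal M" "\<And>x. rho f x \<le> ennreal \<sigma>0"
  using assms by (auto simp: admissible_def)

lemma EE_nonneg: "0 \<le> EE f x" by (simp add: EE_def)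

lemma NN_bound:
  assumes M: "0 < M" and b: "0 < \<beta>" "\<beta> < 1/2" and s: "0 < \<sigma>0" "\<sigma>0 \<le> 3*\<beta>^3/(4*pi*M^2)"
    and f: "f \<in> admissible M \<sigma>0"
  shows "NN f \<le> ennreal (exp (-(1/2) * ln (1 - 2*\<beta>)) * M)"
proof -
  let ?C = "exp (-(1/2) * ln (1 - 2*\<beta>))"
  note fm = adm_D(1)[OF f]
  have "NN f \<le> (\<integral>\<^sup>+x. ennreal ?C * rho f x \<partial>lborel)"
    unfolding NN_def
    by (intro nn_integral_mono inner_le[OF fm] adm_D(2)[OF f] EE_nonneg EE_le_C[OF M b s f])
  also have "\<dots> = ennreal ?C * mass f"
    unfolding mass_def by (rule nn_integral_cmult[OF rho_meas[OF fm]])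
  also have "\<dots> = ennreal (?C * M)"
    using M by (simp add: adm_D(4)[OF f] ennreal_mult)
  finally show ?thesis .
qed

lemma PP_le_NN:
  assumes k: "0 < k" and f: "\<And>x v. 0 \<le> f x v" "\<And>x v. f x v \<le> 1"
  shows "PP k f \<le> NN f"
  unfolding PP_def NN_def
  by (intro nn_integral_mono ennreal_leI mult_left_mono chi_le k f EE_nonneg)

lemma EE_out_le:
  assumes M: "0 < M" and d: "0 < \<delta>" and R: "2*M/(1 - 1/(1+\<delta>/(6*M))^2) \<le> R" "0 < R"
    and f: "mass f = ennreal M" and x: "R \<le> norm x"
  shows "EE f x \<le> 1 + \<delta>/(6*M)"
proof -
  define q where "q = 1 + \<delta>/(6*M)"
  have q1: "1 < q" using M d by (simp add: q_def)
  have q2: "1 < q^2" using q1 by (simp add: one_less_power)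
  define D where "D = 1 - 1/q^2"
  have "1/q^2 < 1" using q2 by (rule divide_less_eq_1_pos[THEN iffD2, rotated]) (use q2 in auto)
  then have D: "0 < D" by (simp add: D_def)
  have "2*M/D \<le> R" using R(1) by (simp add: D_def q_def)
  then have "2*M \<le> R * D" using D by (simp add: pos_divide_le_eq mult.commute)
  then have MR: "2*M/R \<le> D" using R(2) by (simp add: pos_divide_le_eq mult.commute)
  define r where "r = norm x"
  have r: "0 < r" "R \<le> r" using x R by (auto simp: r_def)
  define m where "m = enn2real (m_enc f r)"
  have m: "0 \<le> m" "m \<le> M" using m_enc_le_mass[of f r] f M
    by (auto simp: m_def intro!: enn2real_leI)
  have "2*m/r \<le> 2*M/R" by (rule frac_le) (use m r R in auto)
  with MR have u: "2*m/r \<le> D" by linarith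
  have pos: "0 < 1/q^2" using q1 by simp
  have "1/q^2 \<le> 1 - 2*m/r" using u by (simp add: D_def)
  then have le: "1/q^2 \<le> 1 - 2*m/r" .
  have p2: "0 < 1 - 2*m/r" using pos le by linarith
  have "ln (1/q^2) \<le> ln (1 - 2*m/r)" using ln_le_cancel_iff[OF pos p2] le by simp
  moreover have "ln (1/q^2) = - 2 * ln q" using q1 by (simp add: ln_div ln_realpow)
  ultimately have "lambda_f f r \<le> ln q" by (simp add: lambda_f_def m_def)
  then have "EE f x \<le> exp (ln q)" by (simp add: EE_def r_def)
  then show ?thesis using q1 by (simp add: q_def)
qed

definition cut :: "real \<Rightarrow> distrib \<Rightarrow> distrib" where
  "cut R g x v = indicator (ball 0 R) x * g x v"

lemma ball_sets: "ball (0::vec3) R \<in> sets lborel" by (simp add: borel_open)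

lemma out_sets: "{x::vec3. R \<le> norm x} \<in> sets lborel"
proof -
  have "{x::vec3. R \<le> norm x} = - ball 0 R" by (auto simp: mem_ball_0)
  then show ?thesis by (simp add: borel_comp borel_open)
qed

lemma cut_meas:
  assumes g: "(\<lambda>(x, v). g x v) \<in> borel_measurable (lborel \<Otimes>\<^sub>M lborel)"
  shows "(\<lambda>(x, v). cut R g x v) \<in> borel_measurable (lborel \<Otimes>\<^sub>M lborel)"
proof -
  have i: "(\<lambda>p. indicator (ball (0::vec3) R) (fst p) :: real) \<in> borel_measurable (lborel \<Otimes>\<^sub>M lborel)"
    by (rule measurable_compose[OF measurable_fst borel_measurable_indicator[OF ball_sets]])
  have "(\<lambda>p. indicator (ball (0::vec3) R) (fst p) * g (fst p) (snd p)) \<in> borel_measurable (lborel \<Otimes>\<^sub>M lborel)"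
    by (rule borel_measurable_times[OF i split_meas[OF g]])
  then show ?thesis by (simp add: case_prod_beta' cut_def)
qed

lemma rho_cut: "rho (cut R g) x = indicator (ball 0 R) x * rho g x"
  by (cases "x \<in> ball 0 R") (simp_all add: rho_def cut_def)

lemma m_enc_cut: "r < R \<Longrightarrow> m_enc (cut R g) r = m_enc g r"
  unfolding m_enc_def
  by (intro nn_integral_cong) (auto simp: rho_cut indicator_def mem_ball_0)

lemma EE_cut: "norm x < R \<Longrightarrow> EE (cut R g) x = EE g x"
  by (simp add: EE_def lambda_f_def m_enc_cut)

lemma cut_nonneg: "(\<And>x v. 0 \<le> g x v) \<Longrightarrow> 0 \<le> cut R g x v"
  by (simp add: cut_def)

lemma cut_le1: "(\<And>x v. g x v \<le> 1) \<Longrightarrow> cut R g x v \<le> 1"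
  by (simp add: cut_def indicator_def)

lemma mass_split:
  assumes g: "(\<lambda>(x, v). g x v) \<in> borel_measurable (lborel \<Otimes>\<^sub>M lborel)"
  shows "mass g = mass (cut R g) + (\<integral>\<^sup>+x. indicator {x. R \<le> norm x} x * rho g x \<partial>lborel)"
proof -
  have rm: "rho g \<in> borel_measurable lborel" by (rule rho_meas[OF g])
  have "mass g = (\<integral>\<^sup>+x. indicator (ball 0 R) x * rho g x + indicator {x. R \<le> norm x} x * rho g x \<partial>lborel)"
    unfolding mass_def by (intro nn_integral_cong) (auto simp: indicator_def mem_ball_0)
  also have "\<dots> = (\<integral>\<^sup>+x. indicator (ball 0 R) x * rho g x \<partial>lborel) + (\<integral>\<^sup>+x. indicator {x. R \<le> norm x} x * rho g x \<partial>lborel)"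
    by (intro nn_integral_add borel_measurable_times_ennreal borel_measurable_indicator ball_sets out_sets rm)
  also have "(\<integral>\<^sup>+x. indicator (ball 0 R) x * rho g x \<partial>lborel) = mass (cut R g)"
    by (simp add: mass_def rho_cut)
  finally show ?thesis .
qed

lemma PP_cut_le: "PP k (cut R g) \<le> PP k g"
  unfolding PP_def
proof (intro nn_integral_mono)
  fix x :: vec3 and v :: vec3
  show "ennreal (EE (cut R g) x * chi k (cut R g x v)) \<le> ennreal (EE g x * chi k (g x v))"
    by (cases "norm x < R") (auto simp: EE_cut cut_def mem_ball_0 chi_zero)
qed

lemma mass_cut_le:
  assumes g: "(\<lambda>(x, v). g x v) \<in> borel_measurable (lborel \<Otimes>\<^sub>M lborel)"
  shows "mass (cut R g) \<le> mass g"
  using mass_split[OF g, of R] by (simp add: add_increasing2)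

lemma NN_split:
  assumes g: "(\<lambda>(x, v). g x v) \<in> borel_measurable (lborel \<Otimes>\<^sub>M lborel)" and gfin: "mass g < top"
  shows "NN g = NN (cut R g) + (\<integral>\<^sup>+x. indicator {x. R \<le> norm x} x * (\<integral>\<^sup>+v. ennreal (EE g x * g x v) \<partial>lborel) \<partial>lborel)"
proof -
  have cfin: "mass (cut R g) < top" using mass_cut_le[OF g, of R] gfin by (rule le_less_trans)
  have m1: "(\<lambda>x. \<integral>\<^sup>+v. ennreal (EE (cut R g) x * cut R g x v) \<partial>lborel) \<in> borel_measurable lborel"
    by (rule inner_meas[where G="\<lambda>x v. ennreal (EE (cut R g) x * cut R g x v)", OF joint_meas_g[OF split_meas[OF cut_meas[OF g]] EE_meas[OF cfin]]])
  have m0: "(\<lambda>x. \<integral>\<^sup>+v. ennreal (EE g x * g x v) \<partial>lborel) \<in> borel_measurable lborel"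
    by (rule inner_meas[where G="\<lambda>x v. ennreal (EE g x * g x v)", OF joint_meas_g[OF split_meas[OF g] EE_meas[OF gfin]]])
  have m2: "(\<lambda>x. indicator {x. R \<le> norm x} x * (\<integral>\<^sup>+v. ennreal (EE g x * g x v) \<partial>lborel)) \<in> borel_measurable lborel"
    by (intro borel_measurable_times_ennreal borel_measurable_indicator out_sets m0)
  have "NN g = (\<integral>\<^sup>+x. (\<integral>\<^sup>+v. ennreal (EE (cut R g) x * cut R g x v) \<partial>lborel) + indicator {x. R \<le> norm x} x * (\<integral>\<^sup>+v. ennreal (EE g x * g x v) \<partial>lborel) \<partial>lborel)"
    unfolding NN_def
  proof (intro nn_integral_cong)
    fix x :: vec3
    show "(\<integral>\<^sup>+v. ennreal (EE g x * g x v) \<partial>lborel) = (\<integral>\<^sup>+v. ennreal (EE (cut R g) x * cut R g x v) \<partial>lborel) + indicator {x. R \<le> norm x} x * (\<integral>\<^sup>+v. ennreal (EE g x * g x v) \<partial>lborel)"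
      by (cases "norm x < R") (auto simp: EE_cut cut_def mem_ball_0 indicator_def)
  qed
  also have "\<dots> = NN (cut R g) + (\<integral>\<^sup>+x. indicator {x. R \<le> norm x} x * (\<integral>\<^sup>+v. ennreal (EE g x * g x v) \<partial>lborel) \<partial>lborel)"
    by (subst nn_integral_add[OF m1 m2]) (simp add: NN_def)
  finally show ?thesis .
qed

lemma Nout_le:
  assumes M: "0 < M" and d: "0 < \<delta>" and R: "2*M/(1 - 1/(1+\<delta>/(6*M))^2) \<le> R" "0 < R"
    and g: "(\<lambda>(x, v). g x v) \<in> borel_measurable (lborel \<Otimes>\<^sub>M lborel)" and gnn: "\<And>x v. 0 \<le> g x v"
    and gm: "mass g = ennreal M"
  shows "(\<integral>\<^sup>+x. indicator {x. R \<le> norm x} x * (\<integral>\<^sup>+v. ennreal (EE g x * g x v) \<partial>lborel) \<partial>lborel)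
     \<le> ennreal (1 + \<delta>/(6*M)) * (\<integral>\<^sup>+x. indicator {x. R \<le> norm x} x * rho g x \<partial>lborel)"
proof -
  have "(\<integral>\<^sup>+x. indicator {x. R \<le> norm x} x * (\<integral>\<^sup>+v. ennreal (EE g x * g x v) \<partial>lborel) \<partial>lborel)
     \<le> (\<integral>\<^sup>+x. ennreal (1 + \<delta>/(6*M)) * (indicator {x. R \<le> norm x} x * rho g x) \<partial>lborel)"
  proof (intro nn_integral_mono)
    fix x :: vec3
    show "indicator {x. R \<le> norm x} x * (\<integral>\<^sup>+v. ennreal (EE g x * g x v) \<partial>lborel)
       \<le> ennreal (1 + \<delta>/(6*M)) * (indicator {x. R \<le> norm x} x * rho g x)"
    proof (cases "R \<le> norm x")
      case True
      have "(\<integral>\<^sup>+v. ennreal (EE g x * g x v) \<partial>lborel) \<le> ennreal (1 + \<delta>/(6*M)) * rho g x"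
        by (rule inner_le[OF g gnn EE_nonneg EE_out_le[OF M d R gm True]])
      then show ?thesis using True by simp
    next
      case False then show ?thesis by simp
    qed
  qed
  also have "\<dots> = ennreal (1 + \<delta>/(6*M)) * (\<integral>\<^sup>+x. indicator {x. R \<le> norm x} x * rho g x \<partial>lborel)"
    by (intro nn_integral_cmult borel_measurable_times_ennreal borel_measurable_indicator out_sets rho_meas[OF g])
  finally show ?thesis .
qed

definition scl :: "real \<Rightarrow> distrib \<Rightarrow> distrib" where
  "scl a f x v = f (x /\<^sub>R a) v"

lemma scale_meas: "(\<lambda>x::vec3. c *\<^sub>R x) \<in> borel_measurable lborel"
proof -
  have "(\<lambda>x::vec3. c *\<^sub>R x) \<in> borel_measurable borel"
    by (intro borel_measurable_continuous_onI continuous_intros)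
  then show ?thesis by simp
qed

lemma scale_meas': "(\<lambda>x::vec3. c *\<^sub>R x) \<in> lborel \<rightarrow>\<^sub>M lborel"
  using scale_meas by simp

lemma scl_meas:
  assumes g: "(\<lambda>(x, v). f x v) \<in> borel_measurable (lborel \<Otimes>\<^sub>M lborel)"
  shows "(\<lambda>(x, v). scl a f x v) \<in> borel_measurable (lborel \<Otimes>\<^sub>M lborel)"
proof -
  have mp: "(\<lambda>p::vec3\<times>vec3. (inverse a *\<^sub>R fst p, snd p)) \<in> (lborel \<Otimes>\<^sub>M lborel) \<rightarrow>\<^sub>M (lborel \<Otimes>\<^sub>M lborel)"
  proof -
    have c: "(\<lambda>p::vec3\<times>vec3. inverse a *\<^sub>R fst p) \<in> (lborel \<Otimes>\<^sub>M lborel) \<rightarrow>\<^sub>M (lborel :: vec3 measure)"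
      by (rule measurable_compose[OF measurable_fst scale_meas'])
    show ?thesis by (rule measurable_Pair[OF c measurable_snd])
  qed
  have "(\<lambda>p. f (fst (inverse a *\<^sub>R fst p, snd p)) (snd (inverse a *\<^sub>R fst p, snd p))) \<in> borel_measurable (lborel \<Otimes>\<^sub>M lborel)"
    by (rule measurable_compose[OF mp split_meas[OF g]])
  then show ?thesis by (simp add: case_prod_beta' scl_def)
qed

lemma rho_scl: "rho (scl a f) x = rho f (x /\<^sub>R a)"
  by (simp add: rho_def scl_def)

lemma SO3_norm: "A \<in> SO3 \<Longrightarrow> norm (A *v x) = norm x"
proof -
  assume "A \<in> SO3"
  then have "orthogonal_matrix A" by (simp add: SO3_def)
  then have "orthogonal_transformation ((*v) A)"
    by (simp add: orthogonal_transformation_matrix)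
  then show ?thesis by (rule orthogonal_transformation_norm)
qed

lemma scl_sym: "spherically_symmetric f \<Longrightarrow> spherically_symmetric (scl a f)"
  unfolding spherically_symmetric_def scl_def
  by (simp add: matrix_vector_mult_scaleR[symmetric])

lemma cut_sym: "spherically_symmetric f \<Longrightarrow> spherically_symmetric (cut R f)"
  unfolding spherically_symmetric_def cut_def
  by (simp add: indicator_def mem_ball_0 SO3_norm)

lemma to_borel: "F \<in> borel_measurable lborel \<Longrightarrow> F \<in> borel_measurable borel"
  by simp

lemma mass_scl:
  assumes a: "0 < a" and g: "(\<lambda>(x, v). f x v) \<in> borel_measurable (lborel \<Otimes>\<^sub>M lborel)"
  shows "mass (scl a f) = ennreal (a^3) * mass f"
  unfolding mass_def rho_scl by (rule nn_integral_scale3[OF to_borel[OF rho_meas[OF g]] a])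

lemma norm_div_le: "0 < a \<Longrightarrow> norm (x /\<^sub>R a) \<le> s \<longleftrightarrow> norm x \<le> a * s"
proof -
  assume a: "0 < a"
  have "norm (x /\<^sub>R a) = norm x / a" using a by (simp add: divide_inverse mult.commute)
  then show ?thesis using a by (simp add: pos_divide_le_eq mult.commute)
qed

lemma m_enc_scl:
  assumes a: "0 < a" and g: "(\<lambda>(x, v). f x v) \<in> borel_measurable (lborel \<Otimes>\<^sub>M lborel)"
  shows "m_enc (scl a f) (a * s) = ennreal (a^3) * m_enc f s"
proof -
  have cs: "{y::vec3. norm y \<le> s} \<in> sets lborel"
  proof -
    have "{y::vec3. norm y \<le> s} = cball 0 s" by (auto simp: mem_cball_0)
    then show ?thesis by (simp add: borel_closed)
  qed
  have Fm: "(\<lambda>y. indicator {y::vec3. norm y \<le> s} y * rho f y) \<in> borel_measurable borel"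
    by (rule to_borel, intro borel_measurable_times_ennreal borel_measurable_indicator cs rho_meas[OF g])
  have "m_enc (scl a f) (a * s) = (\<integral>\<^sup>+x. indicator {y::vec3. norm y \<le> s} (x /\<^sub>R a) * rho f (x /\<^sub>R a) \<partial>lborel)"
    unfolding m_enc_def rho_scl
    by (intro nn_integral_cong) (simp add: indicator_def norm_div_le[OF a] del: norm_scaleR)
  also have "\<dots> = ennreal (a^3) * m_enc f s"
    unfolding m_enc_def by (rule nn_integral_scale3[OF Fm a])
  finally show ?thesis .
qed

lemma EE_scl_ge:
  assumes a: "1 \<le> a" and M: "0 < M" and b: "0 < \<beta>" "\<beta> < 1/2" and s: "0 < \<sigma>0" "\<sigma>0 \<le> 3*\<beta>^3/(4*pi*M^2)"
    and g: "(\<lambda>(x, v). f x v) \<in> borel_measurable (lborel \<Otimes>\<^sub>M lborel)"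
    and fa: "scl a f \<in> admissible M \<sigma>0"
  shows "EE f y \<le> EE (scl a f) (a *\<^sub>R y)"
proof (cases "norm y = 0")
  case True
  then show ?thesis using a by (simp add: EE_def lambda_f_def)
next
  case False
  define r where "r = norm y"
  have r: "0 < r" using False by (simp add: r_def)
  have a0: "0 < a" using a by simp
  have nr: "norm (a *\<^sub>R y) = a * r" using a0 by (simp add: r_def)
  define u where "u = 2 * enn2real (m_enc f r) / r"
  have u0: "0 \<le> u" using r by (simp add: u_def)
  have "2 * enn2real (m_enc (scl a f) (a*r)) / (a*r) = a^2 * u"
    unfolding m_enc_scl[OF a0 g] u_def using a0 r
    by (simp add: enn2real_mult power2_eq_square power3_eq_cube field_simps)
  moreover have "2 * enn2real (m_enc (scl a f) (a*r)) / (a*r) \<le> 2*\<beta>"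
    by (rule u_bound[OF M b(1) s fa]) (use a0 r in simp)
  ultimately have ub: "a^2 * u \<le> 2*\<beta>" by simp
  have "1 * u \<le> a^2 * u" using a u0 by (intro mult_right_mono) (auto simp: one_le_power)
  then have uu: "u \<le> a^2 * u" by simp
  have p1: "0 < 1 - a^2 * u" using ub b by linarith
  have "ln (1 - a^2 * u) \<le> ln (1 - u)"
    using uu p1 by (subst ln_le_cancel_iff) auto
  then have "lambda_f f r \<le> lambda_f (scl a f) (a * r)"
    unfolding lambda_f_def
    using \<open>2 * enn2real (m_enc (scl a f) (a*r)) / (a*r) = a^2 * u\<close> by (simp add: u_def)
  then show ?thesis using a0 by (simp add: EE_def nr r_def abs_of_pos)
qed

lemma PP_scl:
  assumes a: "0 < a" and g: "(\<lambda>(x, v). f x v) \<in> borel_measurable (lborel \<Otimes>\<^sub>M lborel)"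
    and fin: "mass (scl a f) < top"
  shows "PP k (scl a f) = ennreal (a^3) * (\<integral>\<^sup>+y. \<integral>\<^sup>+v. ennreal (EE (scl a f) (a *\<^sub>R y) * chi k (f y v)) \<partial>lborel \<partial>lborel)"
proof -
  have ax: "\<And>x::vec3. a *\<^sub>R (x /\<^sub>R a) = x" using a by simp
  have Em: "(\<lambda>y. EE (scl a f) (a *\<^sub>R y)) \<in> borel_measurable lborel"
    by (rule measurable_compose[OF scale_meas' EE_meas[OF fin]])
  have Gm: "(\<lambda>y. \<integral>\<^sup>+v. ennreal (EE (scl a f) (a *\<^sub>R y) * chi k (f y v)) \<partial>lborel) \<in> borel_measurable lborel"
    by (rule inner_meas[where G="\<lambda>y v. ennreal (EE (scl a f) (a *\<^sub>R y) * chi k (f y v))", OF joint_meas_chi[OF split_meas[OF g] Em]])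
  have "PP k (scl a f) = (\<integral>\<^sup>+x. (\<lambda>y. \<integral>\<^sup>+v. ennreal (EE (scl a f) (a *\<^sub>R y) * chi k (f y v)) \<partial>lborel) (x /\<^sub>R a) \<partial>lborel)"
    unfolding PP_def using ax by (intro nn_integral_cong) (simp only: scl_def)
  also have "\<dots> = ennreal (a^3) * (\<integral>\<^sup>+y. \<integral>\<^sup>+v. ennreal (EE (scl a f) (a *\<^sub>R y) * chi k (f y v)) \<partial>lborel \<partial>lborel)"
    by (rule nn_integral_scale3[OF to_borel[OF Gm] a])
  finally show ?thesis .
qed

lemma NN_scl:
  assumes a: "0 < a" and g: "(\<lambda>(x, v). f x v) \<in> borel_measurable (lborel \<Otimes>\<^sub>M lborel)"
    and fin: "mass (scl a f) < top"
  shows "NN (scl a f) = ennreal (a^3) * (\<integral>\<^sup>+y. \<integral>\<^sup>+v. ennreal (EE (scl a f) (a *\<^sub>R y) * f y v) \<partial>lborel \<partial>lborel)"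
proof -
  have ax: "\<And>x::vec3. a *\<^sub>R (x /\<^sub>R a) = x" using a by simp
  have Em: "(\<lambda>y. EE (scl a f) (a *\<^sub>R y)) \<in> borel_measurable lborel"
    by (rule measurable_compose[OF scale_meas' EE_meas[OF fin]])
  have Gm: "(\<lambda>y. \<integral>\<^sup>+v. ennreal (EE (scl a f) (a *\<^sub>R y) * f y v) \<partial>lborel) \<in> borel_measurable lborel"
    by (rule inner_meas[where G="\<lambda>y v. ennreal (EE (scl a f) (a *\<^sub>R y) * f y v)", OF joint_meas_g[OF split_meas[OF g] Em]])
  have "NN (scl a f) = (\<integral>\<^sup>+x. (\<lambda>y. \<integral>\<^sup>+v. ennreal (EE (scl a f) (a *\<^sub>R y) * f y v) \<partial>lborel) (x /\<^sub>R a) \<partial>lborel)"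
    unfolding NN_def using ax by (intro nn_integral_cong) (simp only: scl_def)
  also have "\<dots> = ennreal (a^3) * (\<integral>\<^sup>+y. \<integral>\<^sup>+v. ennreal (EE (scl a f) (a *\<^sub>R y) * f y v) \<partial>lborel \<partial>lborel)"
    by (rule nn_integral_scale3[OF to_borel[OF Gm] a])
  finally show ?thesis .
qed

lemma cross_pt:
  assumes "0 \<le> e1" "e1 \<le> e2" "0 \<le> c" "c \<le> s"
  shows "ennreal (e2 * c) + ennreal (e1 * s) \<le> ennreal (e1 * c) + ennreal (e2 * s)"
proof -
  have "0 \<le> (e2 - e1) * (s - c)" using assms by (intro mult_nonneg_nonneg) auto
  then have h: "e2 * c + e1 * s \<le> e1 * c + e2 * s" by (simp add: algebra_simps)
  have n: "0 \<le> e2" "0 \<le> e2 * c" "0 \<le> e1 * s" "0 \<le> e1 * c" "0 \<le> e2 * s" using assms by auto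
  have "ennreal (e2 * c) + ennreal (e1 * s) = ennreal (e2 * c + e1 * s)" using n by simp
  also have "\<dots> \<le> ennreal (e1 * c + e2 * s)" using h by (intro ennreal_leI) linarith
  also have "\<dots> = ennreal (e1 * c) + ennreal (e2 * s)" using n by simp
  finally show ?thesis .
qed

lemma cross_ineq:
  assumes k: "0 < k" and fm: "(\<lambda>p. f (fst p) (snd p)) \<in> borel_measurable (lborel \<Otimes>\<^sub>M lborel)"
    and E1m: "E1 \<in> borel_measurable lborel" and E2m: "E2 \<in> borel_measurable lborel"
    and E1: "\<And>y. 0 \<le> E1 y" and E12: "\<And>y. E1 y \<le> E2 y" and f0: "\<And>x v. 0 \<le> f x v" and f1: "\<And>x v. f x v \<le> 1"
  shows "(\<integral>\<^sup>+y. \<integral>\<^sup>+v. ennreal (E2 y * chi k (f y v)) \<partial>lborel \<partial>lborel) + (\<integral>\<^sup>+y. \<integral>\<^sup>+v. ennreal (E1 y * f y v) \<partial>lborel \<partial>lborel)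
       \<le> (\<integral>\<^sup>+y. \<integral>\<^sup>+v. ennreal (E1 y * chi k (f y v)) \<partial>lborel \<partial>lborel) + (\<integral>\<^sup>+y. \<integral>\<^sup>+v. ennreal (E2 y * f y v) \<partial>lborel \<partial>lborel)"
proof -
  have jA: "(\<lambda>p. ennreal (E2 (fst p) * chi k (f (fst p) (snd p)))) \<in> borel_measurable (lborel \<Otimes>\<^sub>M lborel)"
    by (rule joint_meas_chi[OF fm E2m])
  have jB: "(\<lambda>p. ennreal (E1 (fst p) * f (fst p) (snd p))) \<in> borel_measurable (lborel \<Otimes>\<^sub>M lborel)"
    by (rule joint_meas_g[OF fm E1m])
  have jC: "(\<lambda>p. ennreal (E1 (fst p) * chi k (f (fst p) (snd p)))) \<in> borel_measurable (lborel \<Otimes>\<^sub>M lborel)"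
    by (rule joint_meas_chi[OF fm E1m])
  have jD: "(\<lambda>p. ennreal (E2 (fst p) * f (fst p) (snd p))) \<in> borel_measurable (lborel \<Otimes>\<^sub>M lborel)"
    by (rule joint_meas_g[OF fm E2m])
  have mA: "(\<lambda>y. \<integral>\<^sup>+v. ennreal (E2 y * chi k (f y v)) \<partial>lborel) \<in> borel_measurable lborel"
    by (rule inner_meas[where G="\<lambda>y v. ennreal (E2 y * chi k (f y v))", OF jA])
  have mB: "(\<lambda>y. \<integral>\<^sup>+v. ennreal (E1 y * f y v) \<partial>lborel) \<in> borel_measurable lborel"
    by (rule inner_meas[where G="\<lambda>y v. ennreal (E1 y * f y v)", OF jB])
  have mC: "(\<lambda>y. \<integral>\<^sup>+v. ennreal (E1 y * chi k (f y v)) \<partial>lborel) \<in> borel_measurable lborel"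
    by (rule inner_meas[where G="\<lambda>y v. ennreal (E1 y * chi k (f y v))", OF jC])
  have mD: "(\<lambda>y. \<integral>\<^sup>+v. ennreal (E2 y * f y v) \<partial>lborel) \<in> borel_measurable lborel"
    by (rule inner_meas[where G="\<lambda>y v. ennreal (E2 y * f y v)", OF jD])
  have pt: "(\<integral>\<^sup>+v. ennreal (E2 y * chi k (f y v)) \<partial>lborel) + (\<integral>\<^sup>+v. ennreal (E1 y * f y v) \<partial>lborel)
      \<le> (\<integral>\<^sup>+v. ennreal (E1 y * chi k (f y v)) \<partial>lborel) + (\<integral>\<^sup>+v. ennreal (E2 y * f y v) \<partial>lborel)" for y
  proof -
    have sA: "(\<lambda>v. ennreal (E2 y * chi k (f y v))) \<in> borel_measurable lborel"
      by (rule slice_meas[where G="\<lambda>y v. ennreal (E2 y * chi k (f y v))", OF jA])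
    have sB: "(\<lambda>v. ennreal (E1 y * f y v)) \<in> borel_measurable lborel"
      by (rule slice_meas[where G="\<lambda>y v. ennreal (E1 y * f y v)", OF jB])
    have sC: "(\<lambda>v. ennreal (E1 y * chi k (f y v))) \<in> borel_measurable lborel"
      by (rule slice_meas[where G="\<lambda>y v. ennreal (E1 y * chi k (f y v))", OF jC])
    have sD: "(\<lambda>v. ennreal (E2 y * f y v)) \<in> borel_measurable lborel"
      by (rule slice_meas[where G="\<lambda>y v. ennreal (E2 y * f y v)", OF jD])
    have "(\<integral>\<^sup>+v. ennreal (E2 y * chi k (f y v)) \<partial>lborel) + (\<integral>\<^sup>+v. ennreal (E1 y * f y v) \<partial>lborel)
        = (\<integral>\<^sup>+v. ennreal (E2 y * chi k (f y v)) + ennreal (E1 y * f y v) \<partial>lborel)"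
      by (rule nn_integral_add[OF sA sB, symmetric])
    also have "\<dots> \<le> (\<integral>\<^sup>+v. ennreal (E1 y * chi k (f y v)) + ennreal (E2 y * f y v) \<partial>lborel)"
      by (intro nn_integral_mono cross_pt E1 E12 chi_nonneg[OF k] chi_le[OF k] f0 f1)
    also have "\<dots> = (\<integral>\<^sup>+v. ennreal (E1 y * chi k (f y v)) \<partial>lborel) + (\<integral>\<^sup>+v. ennreal (E2 y * f y v) \<partial>lborel)"
      by (rule nn_integral_add[OF sC sD])
    finally show ?thesis .
  qed
  have "(\<integral>\<^sup>+y. \<integral>\<^sup>+v. ennreal (E2 y * chi k (f y v)) \<partial>lborel \<partial>lborel) + (\<integral>\<^sup>+y. \<integral>\<^sup>+v. ennreal (E1 y * f y v) \<partial>lborel \<partial>lborel)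
      = (\<integral>\<^sup>+y. (\<integral>\<^sup>+v. ennreal (E2 y * chi k (f y v)) \<partial>lborel) + (\<integral>\<^sup>+v. ennreal (E1 y * f y v) \<partial>lborel) \<partial>lborel)"
    by (rule nn_integral_add[OF mA mB, symmetric])
  also have "\<dots> \<le> (\<integral>\<^sup>+y. (\<integral>\<^sup>+v. ennreal (E1 y * chi k (f y v)) \<partial>lborel) + (\<integral>\<^sup>+v. ennreal (E2 y * f y v) \<partial>lborel) \<partial>lborel)"
    by (intro nn_integral_mono pt)
  also have "\<dots> = (\<integral>\<^sup>+y. \<integral>\<^sup>+v. ennreal (E1 y * chi k (f y v)) \<partial>lborel \<partial>lborel) + (\<integral>\<^sup>+y. \<integral>\<^sup>+v. ennreal (E2 y * f y v) \<partial>lborel \<partial>lborel)"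
    by (rule nn_integral_add[OF mC mD])
  finally show ?thesis .
qed

lemma enn2ereal_fin: "X < top \<Longrightarrow> enn2ereal X = ereal (enn2real X)"
proof -
  assume "X < top"
  then have X: "X = ennreal (enn2real X)" by simp
  have "enn2ereal (ennreal (enn2real X)) = ereal (enn2real X)"
    by (rule enn2ereal_ennreal[OF enn2real_nonneg])
  with X show ?thesis by simp
qed

lemma Dfun_h_le:
  assumes "Dfun k h < 0" "\<bar>Dfun k h\<bar> \<ge> ereal (M + \<delta>)"
  shows "Dfun k h \<le> ereal (-(M + \<delta>))"
  using assms by (cases "Dfun k h") auto

lemma main_contra:
  fixes k M \<beta> \<sigma>0 \<delta> :: real and h :: distrib and I :: ereal and \<eta> R :: real and g :: distrib
  assumes hk: "0 < k" "k \<le> 2" and hM: "0 < M" and h\<beta>: "0 < \<beta>" "\<beta> < 1/2"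
    and h\<sigma>: "0 < \<sigma>0" "\<sigma>0 \<le> min 1 (3 * \<beta>^3 / (4 * pi * M^2))"
    and hI: "I = (INF f \<in> admissible M \<sigma>0. Dfun k f)"
    and hh: "h \<in> admissible M \<sigma>0" "Dfun k h < 0"
    and h\<delta>: "0 < \<delta>" "\<bar>Dfun k h\<bar> \<ge> ereal (M + \<delta>)"
    and h\<eta>: "\<eta> = min 1 (\<delta> / (6 * M))"
    and hR: "R \<ge> max (8 * M / 3) (2 * M / (1 - 1 / (1 + \<delta> / (6 * M))^2))"
    and g: "g \<in> admissible M \<sigma>0" and gle1: "\<forall>x v. g x v \<le> 1"
    and hD: "Dfun k g \<le> I + ereal (\<eta> * DeltaM R g)"
    and dpos: "0 < DeltaM R g" and dlt: "DeltaM R g < M"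
  shows False
proof -
  have s2: "\<sigma>0 \<le> 3*\<beta>^3/(4*pi*M^2)" using h\<sigma> by simp
  have R0: "0 < R" using hR hM by auto
  have R1: "2*M/(1 - 1/(1+\<delta>/(6*M))^2) \<le> R" using hR by auto
  note gm = adm_D(1)[OF g] and gnn = adm_D(2)[OF g] and gsym = adm_D(3)[OF g]
    and gmass = adm_D(4)[OF g] and grho = adm_D(5)[OF g]
  have g1le: "\<And>x v. g x v \<le> 1" using gle1 by simp
  define dM where "dM = DeltaM R g"
  define Y where "Y = (\<integral>\<^sup>+x. indicator {x. R \<le> norm x} x * rho g x \<partial>lborel)"
  define g1 where "g1 = cut R g"
  have split: "ennreal M = mass g1 + Y" using mass_split[OF gm, of R] gmass by (simp add: g1_def Y_def)
  have Yle: "Y \<le> ennreal M" using split by (simp add: add_increasing)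
  have Yfin: "Y < top" using Yle by (simp add: le_less_trans)
  have Yeq: "Y = ennreal dM" using Yfin by (simp add: dM_def DeltaM_def Y_def)
  have m1le: "mass g1 \<le> ennreal M" using split by (simp add: add_increasing2)
  have m1fin: "mass g1 < top" using m1le by (simp add: le_less_trans)
  define m1 where "m1 = enn2real (mass g1)"
  have m1eq: "mass g1 = ennreal m1" using m1fin by (simp add: m1_def)
  have m1nn: "0 \<le> m1" by (simp add: m1_def)
  have dMnn: "0 \<le> dM" using dpos by (simp add: dM_def)
  have "ennreal M = ennreal (m1 + dM)" using split m1eq Yeq m1nn dMnn by simp
  then have Msum: "M = m1 + dM" using hM m1nn dMnn by (subst (asm) ennreal_inj) auto
  have dM0: "0 < dM" "dM < M" using dpos dlt by (auto simp: dM_def)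
  define a3 where "a3 = M / (M - dM)"
  have a3pos: "0 < a3" using dM0 hM by (simp add: a3_def)
  have a3ge: "1 \<le> a3" using dM0 hM by (simp add: a3_def)
  have a3M: "a3 * (M - dM) = M" using dM0 by (simp add: a3_def)
  define a where "a = root 3 a3"
  have a3eq: "a ^ 3 = a3" using a3pos by (simp add: a_def)
  have a1: "1 \<le> a" using a3ge by (simp add: a_def)
  have a0: "0 < a" using a1 by simp
  have g1m: "(\<lambda>(x, v). g1 x v) \<in> borel_measurable (lborel \<Otimes>\<^sub>M lborel)"
    unfolding g1_def by (rule cut_meas[OF gm])
  have g1nn: "\<And>x v. 0 \<le> g1 x v" unfolding g1_def by (rule cut_nonneg[OF gnn])
  have g11: "\<And>x v. g1 x v \<le> 1" unfolding g1_def by (rule cut_le1[OF g1le])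
  define fa where "fa = scl a g1"
  have fam: "(\<lambda>(x, v). fa x v) \<in> borel_measurable (lborel \<Otimes>\<^sub>M lborel)"
    unfolding fa_def by (rule scl_meas[OF g1m])
  have fa_mass: "mass fa = ennreal M"
  proof -
    have "mass fa = ennreal (a^3) * mass g1" unfolding fa_def by (rule mass_scl[OF a0 g1m])
    also have "\<dots> = ennreal (a3 * m1)" using a3eq a3pos m1nn m1eq by (simp add: ennreal_mult)
    also have "a3 * m1 = M" using a3M Msum by simp
    finally show ?thesis .
  qed
  have fa_rho: "rho fa x \<le> ennreal \<sigma>0" for x
  proof -
    have "rho fa x = indicator (ball 0 R) (x /\<^sub>R a) * rho g (x /\<^sub>R a)"
      by (simp add: fa_def g1_def rho_scl rho_cut)
    also have "\<dots> \<le> rho g (x /\<^sub>R a)" by (simp add: indicator_def)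
    also have "\<dots> \<le> ennreal \<sigma>0" by (rule grho)
    finally show ?thesis .
  qed
  have fann: "\<forall>x v. 0 \<le> fa x v" by (simp add: fa_def scl_def g1nn)
  have fasym: "spherically_symmetric fa" unfolding fa_def g1_def by (rule scl_sym[OF cut_sym[OF gsym]])
  have fa_adm: "fa \<in> admissible M \<sigma>0"
    unfolding admissible_def mem_Collect_eq
    using fam fa_mass fa_rho fann fasym by blast
  have fafin: "mass fa < top" using fa_mass by simp
  define C where "C = exp (-(1/2) * ln (1 - 2*\<beta>))"
  have NNg: "NN g \<le> ennreal (C * M)" unfolding C_def by (rule NN_bound[OF hM h\<beta> h\<sigma>(1) s2 g])
  have NNfa: "NN fa \<le> ennreal (C * M)" unfolding C_def by (rule NN_bound[OF hM h\<beta> h\<sigma>(1) s2 fa_adm])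
  have NNgfin: "NN g < top" using NNg by (simp add: le_less_trans)
  have NNfafin: "NN fa < top" using NNfa by (simp add: le_less_trans)
  define Nout where "Nout = (\<integral>\<^sup>+x. indicator {x. R \<le> norm x} x * (\<integral>\<^sup>+v. ennreal (EE g x * g x v) \<partial>lborel) \<partial>lborel)"
  have gfin: "mass g < top" using gmass by simp
  have Nsplit: "NN g = NN g1 + Nout" unfolding g1_def Nout_def by (rule NN_split[OF gm gfin])
  have Nout_le': "Nout \<le> ennreal (1 + \<delta>/(6*M)) * Y"
    unfolding Nout_def Y_def by (rule Nout_le[OF hM h\<delta>(1) R1 R0 gm gnn gmass])
  have PPg1: "PP k g1 \<le> PP k g" unfolding g1_def by (rule PP_cut_le)
  have PPg: "PP k g \<le> NN g" by (rule PP_le_NN[OF hk(1) gnn g1le])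
  define Pa where "Pa = (\<integral>\<^sup>+y. \<integral>\<^sup>+v. ennreal (EE fa (a *\<^sub>R y) * chi k (g1 y v)) \<partial>lborel \<partial>lborel)"
  define Na where "Na = (\<integral>\<^sup>+y. \<integral>\<^sup>+v. ennreal (EE fa (a *\<^sub>R y) * g1 y v) \<partial>lborel \<partial>lborel)"
  have PPfa: "PP k fa = ennreal (a^3) * Pa" unfolding Pa_def fa_def
    by (rule PP_scl[OF a0 g1m]) (use fafin in \<open>simp add: fa_def\<close>)
  have NNfa': "NN fa = ennreal (a^3) * Na" unfolding Na_def fa_def
    by (rule NN_scl[OF a0 g1m]) (use fafin in \<open>simp add: fa_def\<close>)
  have E2m: "(\<lambda>y. EE fa (a *\<^sub>R y)) \<in> borel_measurable lborel"
    by (rule measurable_compose[OF scale_meas' EE_meas[OF fafin]])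
  have E12: "\<And>y. EE g1 y \<le> EE fa (a *\<^sub>R y)"
    unfolding fa_def by (rule EE_scl_ge[OF a1 hM h\<beta> h\<sigma>(1) s2 g1m]) (use fa_adm in \<open>simp add: fa_def\<close>)
  have cross: "Pa + NN g1 \<le> PP k g1 + Na"
    unfolding Pa_def Na_def NN_def PP_def
    by (rule cross_ineq[OF hk(1) split_meas[OF g1m] EE_meas[OF m1fin] E2m EE_nonneg E12 g1nn g11])
  have NNg1le: "NN g1 \<le> NN g" using Nsplit by (simp add: add_increasing2)
  have Noutle: "Nout \<le> NN g" using Nsplit by (simp add: add_increasing)
  have NNg1fin: "NN g1 < top" using NNg1le NNgfin by (rule le_less_trans)
  have Noutfin: "Nout < top" using Noutle NNgfin by (rule le_less_trans)
  have PPgfin: "PP k g < top" using PPg NNgfin by (rule le_less_trans)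
  have PPg1fin: "PP k g1 < top" using PPg1 PPgfin by (rule le_less_trans)
  have a3pos': "0 < a^3" using a0 by simp
  have Nafin: "Na < top"
  proof (rule ccontr)
    assume "\<not> Na < top"
    then have "Na = top" using less_top[of Na] by blast
    then have "NN fa = top" using NNfa' a3pos' by (simp add: ennreal_mult_top)
    then show False using NNfafin by simp
  qed
  have Pafin: "Pa < top"
  proof -
    have "Pa \<le> Pa + NN g1" by (simp add: add_increasing2)
    also have "\<dots> \<le> PP k g1 + Na" by (rule cross)
    also have "\<dots> < top" using PPg1fin Nafin by simp
    finally show ?thesis .
  qed
  define p where "p = enn2real (PP k g)"
  define n where "n = enn2real (NN g)"
  define p1 where "p1 = enn2real (PP k g1)"
  define n1 where "n1 = enn2real (NN g1)"
  define no where "no = enn2real Nout"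
  define pa where "pa = enn2real Pa"
  define na where "na = enn2real Na"
  define q where "q = 1 + \<delta>/(6*M)"
  have q0: "0 \<le> q" using h\<delta> hM by (simp add: q_def)
  have e1: "n = n1 + no" unfolding n_def n1_def no_def Nsplit using NNg1fin Noutfin by (simp add: enn2real_plus)
  have e2: "no \<le> q * dM"
  proof -
    have "Nout \<le> ennreal (q * dM)" using Nout_le' Yeq q0 dMnn by (simp add: q_def ennreal_mult)
    then show ?thesis unfolding no_def using q0 dMnn by (intro enn2real_leI) auto
  qed
  have e3: "p1 \<le> p" unfolding p1_def p_def by (rule enn2real_mono[OF PPg1 PPgfin])
  have e4: "pa + n1 \<le> p1 + na"
  proof -
    have "enn2real (Pa + NN g1) \<le> enn2real (PP k g1 + Na)"
      by (rule enn2real_mono[OF cross]) (use PPg1fin Nafin in simp)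
    then show ?thesis unfolding pa_def n1_def p1_def na_def using Pafin NNg1fin PPg1fin Nafin
      by (simp add: enn2real_plus)
  qed
  have e5: "Dfun k g = ereal (p - n)"
    unfolding Dfun_eq p_def n_def using PPgfin NNgfin by (simp add: enn2ereal_fin)
  have e6: "Dfun k fa = ereal (a3 * pa - a3 * na)"
  proof -
    have Pae: "Pa = ennreal pa" using Pafin by (simp add: pa_def)
    have Nae: "Na = ennreal na" using Nafin by (simp add: na_def)
    have pa0: "0 \<le> pa" "0 \<le> na" by (simp_all add: pa_def na_def)
    have "PP k fa = ennreal (a3 * pa)" using PPfa Pae a3eq a3pos pa0 by (simp add: ennreal_mult)
    moreover have "NN fa = ennreal (a3 * na)" using NNfa' Nae a3eq a3pos pa0 by (simp add: ennreal_mult)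
    ultimately show ?thesis using a3pos pa0 by (simp add: Dfun_eq)
  qed
  have e7: "I \<le> Dfun k fa" unfolding hI by (rule INF_lower[OF fa_adm])
  have e8: "I \<le> ereal (-(M + \<delta>))"
  proof -
    have "I \<le> Dfun k h" unfolding hI by (rule INF_lower[OF hh(1)])
    also have "\<dots> \<le> ereal (-(M + \<delta>))" by (rule Dfun_h_le[OF hh(2) h\<delta>(2)])
    finally show ?thesis .
  qed
  have hD': "ereal (p - n) \<le> I + ereal (\<eta> * dM)" using hD e5 by (simp add: dM_def)
  obtain i where Ii: "I = ereal i"
  proof (cases I)
    case (real r) then show ?thesis using that by simp
  next
    case PInf then show ?thesis using e8 by simp
  next
    case MInf then show ?thesis using hD' by simp
  qed
  have r7: "i \<le> a3 * pa - a3 * na" using e7 e6 Ii by simp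
  have r8: "i \<le> -(M + \<delta>)" using e8 Ii by simp
  have r9: "p - n \<le> i + \<eta> * dM" using hD' Ii by simp
  have s1: "i \<le> a3 * (p1 - n1)"
  proof -
    have "pa - na \<le> p1 - n1" using e4 by linarith
    then have "a3 * (pa - na) \<le> a3 * (p1 - n1)" using a3pos by (intro mult_left_mono) auto
    then show ?thesis using r7 by (simp add: algebra_simps)
  qed
  have s3: "i * (M - dM) \<le> M * (p1 - n1)"
  proof -
    have "i * (M - dM) \<le> a3 * (p1 - n1) * (M - dM)" using s1 dM0 by (intro mult_right_mono) auto
    also have "\<dots> = (a3 * (M - dM)) * (p1 - n1)" by (simp only: mult_ac)
    also have "\<dots> = M * (p1 - n1)" by (simp only: a3M)
    finally show ?thesis .
  qed
  have s4: "p1 - n1 \<le> i + \<eta> * dM + q * dM" using r9 e1 e2 e3 by linarith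
  have s5: "M * (p1 - n1) \<le> M * (i + \<eta> * dM + q * dM)" using s4 hM by (intro mult_left_mono) auto
  have s6: "- i * dM \<le> M * (\<eta> + q) * dM" using s3 s5 by (simp add: algebra_simps)
  have s7: "- i \<le> M * (\<eta> + q)" using mult_right_le_imp_le[of "-i" dM "M * (\<eta> + q)"] s6 dM0 by simp
  have s8: "M * \<eta> \<le> \<delta> / 6"
  proof -
    have "\<eta> \<le> \<delta> / (6 * M)" using h\<eta> by simp
    then have "M * \<eta> \<le> M * (\<delta> / (6 * M))" using hM by (intro mult_left_mono) auto
    also have "\<dots> = \<delta> / 6" using hM by simp
    finally show ?thesis .
  qed
  have s9: "M * q = M + \<delta> / 6" using hM by (simp add: q_def algebra_simps)
  have "M * (\<eta> + q) = M * \<eta> + M * q" by (simp add: algebra_simps)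
  then show False using s7 s8 s9 r8 h\<delta>(1) by linarith
qed

theorem corollary5p4:
  fixes k M \<beta> \<sigma>0 \<delta> :: real and h :: distrib and I :: ereal and \<eta> :: real
  assumes hk: "0 < k" "k \<le> 2"
    and hM: "0 < M"
    and h\<beta>: "0 < \<beta>" "\<beta> < 1/2"
    and h\<sigma>: "0 < \<sigma>0" "\<sigma>0 \<le> min 1 (3 * \<beta>^3 / (4 * pi * M^2))"
    and hI: "I = (INF f \<in> admissible M \<sigma>0. Dfun k f)"
    and hh: "h \<in> admissible M \<sigma>0" "Dfun k h < 0"
    and h\<delta>: "0 < \<delta>" "\<bar>Dfun k h\<bar> \<ge> ereal (M + \<delta>)"
    and h\<eta>: "\<eta> = min 1 (\<delta> / (6 * M))"
  shows "(\<forall>R g. R \<ge> max (8 * M / 3) (2 * M / (1 - 1 / (1 + \<delta> / (6 * M))^2))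
            \<longrightarrow> g \<in> admissible M \<sigma>0 \<longrightarrow> (\<forall>x v. g x v \<le> 1)
            \<longrightarrow> Dfun k g \<le> I + ereal (\<eta> * DeltaM R g)
            \<longrightarrow> 0 < DeltaM R g \<longrightarrow> DeltaM R g < M
            \<longrightarrow> DeltaM R g \<ge> \<delta> / 18)
       \<and> (\<forall>(fs :: nat \<Rightarrow> distrib) (Rs :: nat \<Rightarrow> real) \<epsilon>0.
            (\<forall>n. fs n \<in> admissible M \<sigma>0) \<longrightarrow> (\<lambda>n. Dfun k (fs n)) \<longlonglongrightarrow> I
            \<longrightarrow> (\<forall>n x v. fs n x v \<le> 1)
            \<longrightarrow> (\<forall>n. Rs n \<ge> max (8 * M / 3) (2 * M / (1 - (1 + \<delta> / (6 * M)) powr (-2))))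
            \<longrightarrow> (\<lambda>n. DeltaM (Rs n) (fs n)) \<longlonglongrightarrow> \<epsilon>0
            \<longrightarrow> 0 < \<epsilon>0 \<longrightarrow> \<epsilon>0 < M
            \<longrightarrow> \<epsilon>0 \<ge> \<delta> / 18)"
proof -
  have s2: "\<sigma>0 \<le> 3*\<beta>^3/(4*pi*M^2)" using h\<sigma> by simp
  define C where "C = exp (-(1/2) * ln (1 - 2*\<beta>))"
  have Ilow: "ereal (-(C*M)) \<le> I"
    unfolding hI
  proof (rule INF_greatest)
    fix f assume f: "f \<in> admissible M \<sigma>0"
    have NNf: "NN f \<le> ennreal (C * M)" unfolding C_def by (rule NN_bound[OF hM h\<beta> h\<sigma>(1) s2 f])
    have fin: "NN f < top" using NNf by (simp add: le_less_trans)
    have n: "enn2real (NN f) \<le> C * M" using NNf hM by (intro enn2real_leI) (auto simp: C_def)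
    have P0: "0 \<le> enn2ereal (PP k f)" by simp
    have "Dfun k f = enn2ereal (PP k f) - ereal (enn2real (NN f))"
      by (simp add: Dfun_eq enn2ereal_fin[OF fin])
    moreover have "ereal (-(C*M)) \<le> enn2ereal (PP k f) - ereal (enn2real (NN f))"
      using P0 n by (cases "enn2ereal (PP k f)") auto
    ultimately show "ereal (-(C*M)) \<le> Dfun k f" by simp
  qed
  have Ih: "I \<le> ereal (-(M + \<delta>))"
  proof -
    have "I \<le> Dfun k h" unfolding hI by (rule INF_lower[OF hh(1)])
    also have "\<dots> \<le> ereal (-(M + \<delta>))" by (rule Dfun_h_le[OF hh(2) h\<delta>(2)])
    finally show ?thesis .
  qed
  obtain i where Ii: "I = ereal i"
  proof (cases I)
    case (real r) then show ?thesis using that by simp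
  next
    case PInf then show ?thesis using Ih by simp
  next
    case MInf then show ?thesis using Ilow by simp
  qed
  have part1: "\<forall>R g. R \<ge> max (8 * M / 3) (2 * M / (1 - 1 / (1 + \<delta> / (6 * M))^2))
            \<longrightarrow> g \<in> admissible M \<sigma>0 \<longrightarrow> (\<forall>x v. g x v \<le> 1)
            \<longrightarrow> Dfun k g \<le> I + ereal (\<eta> * DeltaM R g)
            \<longrightarrow> 0 < DeltaM R g \<longrightarrow> DeltaM R g < M
            \<longrightarrow> DeltaM R g \<ge> \<delta> / 18"
  proof (intro allI impI)
    fix R g
    assume "R \<ge> max (8 * M / 3) (2 * M / (1 - 1 / (1 + \<delta> / (6 * M))^2))" "g \<in> admissible M \<sigma>0"
      "\<forall>x v. g x v \<le> 1" "Dfun k g \<le> I + ereal (\<eta> * DeltaM R g)" "0 < DeltaM R g" "DeltaM R g < M"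
    then have False by (intro main_contra[OF hk hM h\<beta> h\<sigma> hI hh h\<delta> h\<eta>])
    then show "DeltaM R g \<ge> \<delta> / 18" ..
  qed
  have part2: "\<forall>(fs :: nat \<Rightarrow> distrib) (Rs :: nat \<Rightarrow> real) \<epsilon>0.
            (\<forall>n. fs n \<in> admissible M \<sigma>0) \<longrightarrow> (\<lambda>n. Dfun k (fs n)) \<longlonglongrightarrow> I
            \<longrightarrow> (\<forall>n x v. fs n x v \<le> 1)
            \<longrightarrow> (\<forall>n. Rs n \<ge> max (8 * M / 3) (2 * M / (1 - (1 + \<delta> / (6 * M)) powr (-2))))
            \<longrightarrow> (\<lambda>n. DeltaM (Rs n) (fs n)) \<longlonglongrightarrow> \<epsilon>0
            \<longrightarrow> 0 < \<epsilon>0 \<longrightarrow> \<epsilon>0 < M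
            \<longrightarrow> \<epsilon>0 \<ge> \<delta> / 18"
  proof (intro allI impI)
    fix fs :: "nat \<Rightarrow> distrib" and Rs :: "nat \<Rightarrow> real" and \<epsilon>0 :: real
    assume fsA: "\<forall>n. fs n \<in> admissible M \<sigma>0" and limD: "(\<lambda>n. Dfun k (fs n)) \<longlonglongrightarrow> I"
      and fs1: "\<forall>n x v. fs n x v \<le> 1"
      and Rs: "\<forall>n. Rs n \<ge> max (8 * M / 3) (2 * M / (1 - (1 + \<delta> / (6 * M)) powr (-2)))"
      and limM: "(\<lambda>n. DeltaM (Rs n) (fs n)) \<longlonglongrightarrow> \<epsilon>0"
      and e0: "0 < \<epsilon>0" and e1: "\<epsilon>0 < M"
    have eta0: "0 < \<eta>" using h\<eta> h\<delta>(1) hM by simp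
    define c where "c = \<eta> * \<epsilon>0 / 2"
    have c0: "0 < c" using eta0 e0 by (simp add: c_def)
    have ev1: "eventually (\<lambda>n. Dfun k (fs n) < ereal (i + c)) sequentially"
      by (rule order_tendstoD(2)[OF limD]) (use Ii c0 in simp)
    have ev2: "eventually (\<lambda>n. \<epsilon>0 / 2 < DeltaM (Rs n) (fs n)) sequentially"
      by (rule order_tendstoD(1)[OF limM]) (use e0 in simp)
    have ev3: "eventually (\<lambda>n. DeltaM (Rs n) (fs n) < M) sequentially"
      by (rule order_tendstoD(2)[OF limM e1])
    have "eventually (\<lambda>n. Dfun k (fs n) < ereal (i + c) \<and> \<epsilon>0 / 2 < DeltaM (Rs n) (fs n) \<and> DeltaM (Rs n) (fs n) < M) sequentially"
      using ev1 ev2 ev3 by eventually_elim auto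
    then obtain N where N: "\<And>n. n \<ge> N \<Longrightarrow> Dfun k (fs n) < ereal (i + c) \<and> \<epsilon>0 / 2 < DeltaM (Rs n) (fs n) \<and> DeltaM (Rs n) (fs n) < M"
      unfolding eventually_sequentially by blast
    have NN: "Dfun k (fs N) < ereal (i + c)" "\<epsilon>0 / 2 < DeltaM (Rs N) (fs N)" "DeltaM (Rs N) (fs N) < M"
      using N[of N] by auto
    have "c \<le> \<eta> * DeltaM (Rs N) (fs N)"
      unfolding c_def using NN(2) eta0 by (simp add: mult_left_mono less_imp_le)
    then have "Dfun k (fs N) \<le> I + ereal (\<eta> * DeltaM (Rs N) (fs N))"
    proof -
      have "ereal (i + c) \<le> ereal (i + \<eta> * DeltaM (Rs N) (fs N))" using \<open>c \<le> _\<close> by simp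
      then have "Dfun k (fs N) \<le> ereal (i + \<eta> * DeltaM (Rs N) (fs N))" by (rule order_trans[OF less_imp_le[OF NN(1)]])
      then show ?thesis using Ii by simp
    qed
    moreover have "0 < DeltaM (Rs N) (fs N)" using NN(2) e0 by linarith
    moreover have "Rs N \<ge> max (8 * M / 3) (2 * M / (1 - 1 / (1 + \<delta> / (6 * M))^2))"
    proof -
      have pos: "0 < 1 + \<delta> / (6 * M)" using h\<delta>(1) hM by (intro add_pos_pos) auto
      have "(1 + \<delta> / (6 * M)) powr (-2) = 1 / (1 + \<delta> / (6 * M))^2"
        using pos by (simp add: powr_minus_divide powr_numeral)
      then show ?thesis using Rs by metis
    qed
    ultimately have False
      using fsA fs1 NN(3) by (intro main_contra[OF hk hM h\<beta> h\<sigma> hI hh h\<delta> h\<eta>]) auto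
    then show "\<epsilon>0 \<ge> \<delta> / 18" ..
  qed
  show ?thesis using part1 part2 by blast
qed

end
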